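(* For all $0<x<\pi/2$, \[ \frac{P(x)}{(\pi^2-4x^2)^2}<x\sec^2x-\tan x<\frac{Q(x)}{(\pi^2-4x^2)^2}, \] where \[ P(x)=\frac{2\pi^4}{3}x^3+\frac{8\pi^2(\pi^2-10)}{15}x^5+\frac{2(322560+1680\pi^4-672\pi^6+17\pi^8)}{315\pi^4}x^7+\frac{16(168-17\pi^2)}{315}x^9+\frac{32(17\pi^8-161280)}{315\pi^8}x^{11} \] and \[ Q(x)=\frac{2\pi^4}{3}x^3+\frac{32(156-6\pi^2-\pi^4)}{3\pi^2}x^5+\frac{64(-657+37\pi^2+3\pi^4)}{3\pi^4}x^7+\frac{512(285-19\pi^2-\pi^4)}{3\pi^6}x^9+\frac{512(-354+26\pi^2+\pi^4)}{3\pi^8}x^{11}. \] *)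

theory Defs
  imports Complex_Main
begin

definition P19 :: "real \<Rightarrow> real" where
  "P19 x = 2 * pi^4 / 3 * x^3
    + 8 * pi^2 * (pi^2 - 10) / 15 * x^5
    + 2 * (322560 + 1680 * pi^4 - 672 * pi^6 + 17 * pi^8) / (315 * pi^4) * x^7
    + 16 * (168 - 17 * pi^2) / 315 * x^9
    + 32 * (17 * pi^8 - 161280) / (315 * pi^8) * x^11"

definition Q19 :: "real \<Rightarrow> real" where
  "Q19 x = 2 * pi^4 / 3 * x^3
    + 32 * (156 - 6 * pi^2 - pi^4) / (3 * pi^2) * x^5
    + 64 * (-657 + 37 * pi^2 + 3 * pi^4) / (3 * pi^4) * x^7
    + 512 * (285 - 19 * pi^2 - pi^4) / (3 * pi^6) * x^9
    + 512 * (-354 + 26 * pi^2 + pi^4) / (3 * pi^8) * x^11"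

end

theory Submission
  imports Defs
begin




fun pev :: "real list \<Rightarrow> real \<Rightarrow> real" where
  "pev [] x = 0"
| "pev (c # cs) x = c + x * pev cs x"

fun padd :: "real list \<Rightarrow> real list \<Rightarrow> real list" where
  "padd [] ys = ys"
| "padd xs [] = xs"
| "padd (x # xs) (y # ys) = (x + y) # padd xs ys"

definition psc :: "real \<Rightarrow> real list \<Rightarrow> real list" where
  "psc c xs = map (\<lambda>y. c * y) xs"

fun pmul :: "real list \<Rightarrow> real list \<Rightarrow> real list" where
  "pmul [] ys = []"
| "pmul (x # xs) ys = padd (psc x ys) (0 # pmul xs ys)"

fun pcomp :: "real list \<Rightarrow> real list \<Rightarrow> real list" where
  "pcomp [] X = []"
| "pcomp (c # cs) X = padd [c] (pmul X (pcomp cs X))"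

lemma pev_padd [simp]: "pev (padd xs ys) x = pev xs x + pev ys x"
  by (induction xs ys rule: padd.induct) (auto simp: algebra_simps)

lemma pev_psc [simp]: "pev (psc c xs) x = c * pev xs x"
  by (induction xs) (auto simp: psc_def algebra_simps)

lemma pev_pmul [simp]: "pev (pmul xs ys) x = pev xs x * pev ys x"
  by (induction xs) (auto simp: algebra_simps)

lemma pev_pcomp [simp]: "pev (pcomp cs X) x = pev cs (pev X x)"
  by (induction cs) (auto simp: algebra_simps)

fun qev :: "real list list \<Rightarrow> real \<Rightarrow> real \<Rightarrow> real" where
  "qev [] v p = 0"
| "qev (c # cs) v p = pev c p + v * qev cs v p"

fun qadd :: "real list list \<Rightarrow> real list list \<Rightarrow> real list list" where
  "qadd [] ys = ys"
| "qadd xs [] = xs"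
| "qadd (x # xs) (y # ys) = padd x y # qadd xs ys"

definition qsc :: "real list \<Rightarrow> real list list \<Rightarrow> real list list" where
  "qsc c xs = map (pmul c) xs"

fun qmul :: "real list list \<Rightarrow> real list list \<Rightarrow> real list list" where
  "qmul [] ys = []"
| "qmul (x # xs) ys = qadd (qsc x ys) ([] # qmul xs ys)"

fun qcomp :: "real list list \<Rightarrow> real list list \<Rightarrow> real list list" where
  "qcomp [] X = []"
| "qcomp (c # cs) X = qadd [c] (qmul X (qcomp cs X))"

definition qsub :: "real list list \<Rightarrow> real list list \<Rightarrow> real list list" where
  "qsub xs ys = qadd xs (qsc [-1] ys)"

lemma qev_qadd [simp]: "qev (qadd xs ys) v p = qev xs v p + qev ys v p"
  by (induction xs ys rule: qadd.induct) (auto simp: algebra_simps)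

lemma qev_qsc [simp]: "qev (qsc c xs) v p = pev c p * qev xs v p"
  by (induction xs) (auto simp: qsc_def algebra_simps)

lemma qev_qmul [simp]: "qev (qmul xs ys) v p = qev xs v p * qev ys v p"
  by (induction xs) (auto simp: algebra_simps)

lemma qev_qcomp [simp]: "qev (qcomp cs X) v p = qev cs (qev X v p) p"
  by (induction cs) (auto simp: algebra_simps)

lemma qev_qsub [simp]: "qev (qsub xs ys) v p = qev xs v p - qev ys v p"
  by (simp add: qsub_def)

lemma pev_zero: "list_all (\<lambda>c. c = 0) c \<Longrightarrow> pev c p = 0"
  by (induction c) auto

lemma qev_drop:
  "list_all (list_all (\<lambda>c. c = 0)) (take k Q) \<Longrightarrow> qev Q v p = v ^ k * qev (drop k Q) v p"
proof (induction k arbitrary: Q)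
  case 0 then show ?case by simp
next
  case (Suc k)
  show ?case
  proof (cases Q)
    case Nil then show ?thesis by simp
  next
    case (Cons c cs)
    have "pev c p = 0" using Suc.prems Cons pev_zero by simp
    moreover have "qev cs v p = v ^ k * qev (drop k cs) v p"
      using Suc.IH[of cs] Suc.prems Cons by simp
    ultimately show ?thesis using Cons by simp
  qed
qed

fun lbp :: "real list \<Rightarrow> real \<Rightarrow> real \<Rightarrow> real" where
  "lbp [] a b = 0"
| "lbp (c # cs) a b = (let r = lbp cs a b in c + (if 0 \<le> r then a * r else b * r))"

lemma lbp_le: "0 \<le> a \<Longrightarrow> a \<le> x \<Longrightarrow> x \<le> b \<Longrightarrow> lbp cs a b \<le> pev cs x"
proof (induction cs)
  case Nil then show ?case by simp
next
  case (Cons c cs)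
  let ?r = "lbp cs a b"
  have r: "?r \<le> pev cs x" using Cons by simp
  have "(if 0 \<le> ?r then a * ?r else b * ?r) \<le> x * ?r"
    using Cons.prems by (auto intro: mult_right_mono mult_right_mono_neg)
  also have "\<dots> \<le> x * pev cs x" using r Cons.prems by (simp add: mult_left_mono)
  finally show ?case by (simp add: Let_def)
qed

lemma lbq_le:
  assumes "0 \<le> pl" "pl \<le> p" "p \<le> ph" "0 \<le> v"
  shows "pev (map (\<lambda>c. lbp c pl ph) Q) v \<le> qev Q v p"
proof (induction Q)
  case Nil then show ?case by simp
next
  case (Cons c cs)
  have "lbp c pl ph \<le> pev c p" using assms lbp_le by blast
  moreover have "v * pev (map (\<lambda>c. lbp c pl ph) cs) v \<le> v * qev cs v p"
    using Cons assms(4) by (simp add: mult_left_mono)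
  ultimately show ?case by simp
qed

definition chk :: "real list \<Rightarrow> real \<Rightarrow> real \<Rightarrow> bool" where
  "chk cs a b = (0 < lbp (pcomp cs [a, 1]) 0 (b - a))"

lemma chk_pos: "chk cs a b \<Longrightarrow> a \<le> v \<Longrightarrow> v \<le> b \<Longrightarrow> 0 < pev cs v"
proof -
  assume c: "chk cs a b" and v: "a \<le> v" "v \<le> b"
  have "lbp (pcomp cs [a, 1]) 0 (b - a) \<le> pev (pcomp cs [a, 1]) (v - a)"
    by (rule lbp_le) (use v in auto)
  also have "\<dots> = pev cs v" by simp
  finally show ?thesis using c by (simp add: chk_def)
qed

fun chkall :: "real list \<Rightarrow> real list \<Rightarrow> bool" where
  "chkall cs [] = False"
| "chkall cs [t] = False"
| "chkall cs [t, s] = chk cs t s"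
| "chkall cs (t # s # r # ts) = (chk cs t s \<and> chkall cs (s # r # ts))"

lemma chkall_pos: "chkall cs ts \<Longrightarrow> hd ts \<le> v \<Longrightarrow> v \<le> last ts \<Longrightarrow> 0 < pev cs v"
proof (induction cs ts rule: chkall.induct)
  case (3 cs t s) then show ?case using chk_pos by auto
next
  case (4 cs t s r ts)
  show ?case
  proof (cases "v \<le> s")
    case True then show ?thesis using 4 chk_pos by auto
  next
    case False then show ?thesis using 4 by auto
  qed
qed auto

lemma pos_from_check:
  assumes "chkall (map (\<lambda>c. lbp c pl ph) Q) ts" "hd ts \<le> v" "v \<le> last ts"
    "0 \<le> pl" "pl \<le> p" "p \<le> ph" "0 \<le> v"
  shows "0 < qev Q v p"
  using chkall_pos[OF assms(1-3)] lbq_le[OF assms(4-7), of Q] by linarith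

fun mlb :: "real list \<Rightarrow> real list \<Rightarrow> real list \<Rightarrow> real" where
  "mlb (c # cs) (l # ls) (h # hs) = (if 0 \<le> c then c * l else c * h) + mlb cs ls hs"
| "mlb [] ls hs = 0"
| "mlb (c # cs) [] hs = -1"
| "mlb (c # cs) (l # ls) [] = -1"

definition pbnd :: "real \<Rightarrow> real \<Rightarrow> nat \<Rightarrow> real list \<Rightarrow> real list \<Rightarrow> bool" where
  "pbnd p sg k ls hs = (length hs = length ls \<and>
     (\<forall>j < length ls. ls ! j \<le> sg * p ^ (k + j) \<and> sg * p ^ (k + j) \<le> hs ! j))"

lemma mlb_le:
  "pbnd p sg k ls hs \<Longrightarrow> length cs \<le> length ls \<Longrightarrow> mlb cs ls hs \<le> sg * p ^ k * pev cs p"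
proof (induction cs arbitrary: k ls hs)
  case Nil then show ?case by simp
next
  case (Cons c cs)
  obtain l ls' where ls: "ls = l # ls'" using Cons.prems by (cases ls) auto
  obtain h hs' where hs: "hs = h # hs'" using Cons.prems ls unfolding pbnd_def by (cases hs) auto
  have b0: "l \<le> sg * p ^ k" "sg * p ^ k \<le> h" using Cons.prems ls hs unfolding pbnd_def by force+
  have "pbnd p sg (Suc k) ls' hs'" using Cons.prems ls hs unfolding pbnd_def
    by (auto simp: nth_Cons_Suc)
  then have ih: "mlb cs ls' hs' \<le> sg * p ^ Suc k * pev cs p"
    using Cons.IH[of "Suc k" ls' hs'] Cons.prems ls by simp
  have "(if 0 \<le> c then c * l else c * h) \<le> c * (sg * p ^ k)"
    using b0 by (auto intro: mult_left_mono mult_left_mono_neg)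
  then show ?case using ih ls hs by (simp add: algebra_simps)
qed

fun pwok :: "real \<Rightarrow> real \<Rightarrow> real \<Rightarrow> real \<Rightarrow> real \<Rightarrow> real list \<Rightarrow> real list \<Rightarrow> bool" where
  "pwok pn qn dn lp hp [] [] = True"
| "pwok pn qn dn lp hp (l # ls) (h # hs) =
     (0 \<le> l \<and> l * dn \<le> lp * pn \<and> hp * qn \<le> h * dn \<and> pwok pn qn dn l h ls hs)"
| "pwok pn qn dn lp hp _ _ = False"

lemma pwok_bnd:
  "pwok pn qn dn lp hp ls hs \<Longrightarrow> 0 < dn \<Longrightarrow> 0 \<le> pn \<Longrightarrow> pn / dn \<le> p \<Longrightarrow> p \<le> qn / dn \<Longrightarrow>
    0 \<le> lp \<Longrightarrow> lp \<le> sg * p ^ k \<Longrightarrow> sg * p ^ k \<le> hp \<Longrightarrow> pbnd p sg (Suc k) ls hs"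
proof (induction pn qn dn lp hp ls hs arbitrary: k rule: pwok.induct)
  case (1 pn qn dn lp hp) then show ?case by (simp add: pbnd_def)
next
  case (2 pn qn dn lp hp l ls h hs)
  have p0: "0 \<le> p" using 2 by (metis div_0 divide_right_mono order.trans less_le)
  have l: "l \<le> sg * p ^ Suc k"
  proof -
    have "l \<le> lp * (pn / dn)" using 2 by (simp add: field_simps)
    also have "\<dots> \<le> (sg * p ^ k) * p" using 2 by (intro mult_mono) auto
    finally show ?thesis by (simp add: algebra_simps)
  qed
  have h: "sg * p ^ Suc k \<le> h"
  proof -
    have "(sg * p ^ k) * p \<le> hp * (qn / dn)" using 2 p0 by (intro mult_mono) auto
    also have "\<dots> \<le> h" using 2 by (simp add: field_simps)
    finally show ?thesis by (simp add: algebra_simps)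
  qed
  have "pbnd p sg (Suc (Suc k)) ls hs" using 2 l h by auto
  then show ?case using l h unfolding pbnd_def
    by (auto simp: less_Suc_eq_0_disj)
qed auto

lemma pbnd_full: "pwok pn qn dn sg sg ls hs \<Longrightarrow> 0 < dn \<Longrightarrow> 0 \<le> pn \<Longrightarrow> pn / dn \<le> p \<Longrightarrow>
    p \<le> qn / dn \<Longrightarrow> 0 \<le> sg \<Longrightarrow> pbnd p sg 0 (sg # ls) (sg # hs)"
  using pwok_bnd[of pn qn dn sg sg ls hs p sg 0] unfolding pbnd_def
  by (auto simp: less_Suc_eq_0_disj)

lemma pev_mono_coeff:
  "list_all2 (\<lambda>a b. a * M \<le> b) as bs \<Longrightarrow> 0 \<le> v \<Longrightarrow> M * pev as v \<le> pev bs v"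
proof (induction as arbitrary: bs)
  case Nil then show ?case by (cases bs) auto
next
  case (Cons a as)
  then obtain b bs' where bs: "bs = b # bs'" by (cases bs) auto
  have "v * (M * pev as v) \<le> v * pev bs' v" using Cons bs by (auto intro: mult_left_mono)
  then show ?case using Cons bs by (simp add: algebra_simps)
qed

fun pdil :: "real list \<Rightarrow> real \<Rightarrow> real list" where
  "pdil [] N = []"
| "pdil (c # cs) N = c * N ^ Suc (length cs) # pdil cs N"

lemma pev_pdil: "N \<noteq> 0 \<Longrightarrow> pev (pdil cs N) t = N ^ length cs * pev cs (t / N)"
  by (induction cs) (auto simp: algebra_simps)

definition chk2 :: "real list \<Rightarrow> real \<Rightarrow> real \<Rightarrow> real \<Rightarrow> bool" where
  "chk2 cs N a b = (0 < lbp (pcomp (pdil cs N) [a, 1]) 0 (b - a))"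

lemma chk2_pos: "chk2 cs N a b \<Longrightarrow> 0 < N \<Longrightarrow> a \<le> N * v \<Longrightarrow> N * v \<le> b \<Longrightarrow> 0 < pev cs v"
proof -
  assume c: "chk2 cs N a b" and N: "0 < N" and v: "a \<le> N * v" "N * v \<le> b"
  have "lbp (pcomp (pdil cs N) [a, 1]) 0 (b - a) \<le> pev (pcomp (pdil cs N) [a, 1]) (N * v - a)"
    by (rule lbp_le) (use v in auto)
  also have "\<dots> = N ^ length cs * pev cs v" using N by (simp add: pev_pdil)
  finally have "0 < N ^ length cs * pev cs v" using c by (simp add: chk2_def)
  then show ?thesis using N by (simp add: zero_less_mult_iff)
qed

fun chkall2 :: "real list \<Rightarrow> real \<Rightarrow> real list \<Rightarrow> bool" where
  "chkall2 cs N [] = False"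
| "chkall2 cs N [t] = False"
| "chkall2 cs N [t, s] = chk2 cs N t s"
| "chkall2 cs N (t # s # r # ts) = (chk2 cs N t s \<and> chkall2 cs N (s # r # ts))"

lemma chkall2_pos: "chkall2 cs N ts \<Longrightarrow> 0 < N \<Longrightarrow> hd ts \<le> N * v \<Longrightarrow> N * v \<le> last ts \<Longrightarrow> 0 < pev cs v"
proof (induction cs N ts rule: chkall2.induct)
  case (3 cs N t s) then show ?case using chk2_pos by auto
next
  case (4 cs N t s r ts)
  show ?case
  proof (cases "N * v \<le> s")
    case True then show ?thesis using 4 chk2_pos by auto
  next
    case False then show ?thesis using 4 by auto
  qed
qed auto

lemma pos_from_check3:
  assumes "pbnd p sg 0 ls hs" "list_all (\<lambda>c. length c \<le> length ls) Q"
    "list_all2 (\<lambda>a b. a * M \<le> b) CL (map (\<lambda>c. mlb c ls hs) Q)"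
    "chkall2 CL N ts" "0 < N" "hd ts \<le> N * v" "N * v \<le> last ts" "0 \<le> v" "0 < M" "0 < sg"
  shows "0 < qev Q v p"
proof -
  have "pev (map (\<lambda>c. mlb c ls hs) Q) v \<le> sg * qev Q v p"
    using assms(2) proof (induction Q)
    case Nil then show ?case by simp
  next
    case (Cons c cs)
    have "mlb c ls hs \<le> sg * pev c p" using mlb_le[OF assms(1)] Cons.prems by fastforce
    moreover have "v * pev (map (\<lambda>c. mlb c ls hs) cs) v \<le> v * (sg * qev cs v p)"
      using Cons assms(8) by (simp add: mult_left_mono)
    ultimately show ?case by (simp add: algebra_simps)
  qed
  moreover have "M * pev CL v \<le> pev (map (\<lambda>c. mlb c ls hs) Q) v"
    using pev_mono_coeff[OF assms(3) assms(8)] .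
  moreover have "0 < pev CL v" using chkall2_pos[OF assms(4-7)] .
  ultimately have "0 < sg * qev Q v p" using assms(9)
    by (smt (verit) mult_pos_pos)
  then show ?thesis using assms(10) by (simp add: zero_less_mult_iff)
qed




lemma pev_append: "pev (xs @ ys) x = pev xs x + x ^ length xs * pev ys x"
  by (induction xs) (auto simp: algebra_simps)

lemma pev_map_upt: "pev (map f [0..<n]) x = (\<Sum>m<n. f m * x ^ m)"
  by (induction n) (auto simp: pev_append)

lemma taylor_list: "pev (map f [0..<n] @ [e]) x = (\<Sum>m<n. f m * x ^ m) + e * x ^ n"
  by (simp add: pev_append pev_map_upt)

lemma cos_bound: "\<bar>cos x - (\<Sum>m<n. cos_coeff m * x ^ m)\<bar> \<le> inverse (fact n) * \<bar>x\<bar> ^ n"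
proof -
  obtain t where t: "cos x = (\<Sum>m<n. cos_coeff m * x ^ m) + (cos (t + 1/2 * real n * pi) / fact n) * x ^ n"
    using Maclaurin_cos_expansion[of x n] by blast
  define c where "c = cos (t + 1/2 * real n * pi)"
  have c: "\<bar>c\<bar> \<le> 1" unfolding c_def by simp
  have "\<bar>c / fact n * x ^ n\<bar> = \<bar>c\<bar> * (inverse (fact n) * \<bar>x\<bar> ^ n)"
    by (simp add: abs_mult power_abs divide_inverse)
  also have "\<dots> \<le> 1 * (inverse (fact n) * \<bar>x\<bar> ^ n)"
    by (rule mult_right_mono[OF c]) simp
  finally have "\<bar>c / fact n * x ^ n\<bar> \<le> inverse (fact n) * \<bar>x\<bar> ^ n" by simp
  moreover have "cos x - (\<Sum>m<n. cos_coeff m * x ^ m) = c / fact n * x ^ n"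
    using t unfolding c_def by simp
  ultimately show ?thesis by simp
qed

lemma sin_up: "0 \<le> x \<Longrightarrow> sin x \<le> pev (map sin_coeff [0..<n] @ [inverse (fact n)]) x"
  using Maclaurin_sin_bound[of x n] by (simp add: taylor_list abs_le_iff)
lemma sin_lo: "0 \<le> x \<Longrightarrow> pev (map sin_coeff [0..<n] @ [- inverse (fact n)]) x \<le> sin x"
  using Maclaurin_sin_bound[of x n] by (simp add: taylor_list abs_le_iff)
lemma cos_up: "0 \<le> x \<Longrightarrow> cos x \<le> pev (map cos_coeff [0..<n] @ [inverse (fact n)]) x"
  using cos_bound[of x n] by (simp add: taylor_list abs_le_iff)
lemma cos_lo: "0 \<le> x \<Longrightarrow> pev (map cos_coeff [0..<n] @ [- inverse (fact n)]) x \<le> cos x"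
  using cos_bound[of x n] by (simp add: taylor_list abs_le_iff)

lemma cos_nonpos: "pi/2 \<le> x \<Longrightarrow> x \<le> 3 * pi / 2 \<Longrightarrow> cos x \<le> 0"
proof -
  assume a: "pi/2 \<le> x" "x \<le> 3 * pi / 2"
  have "0 \<le> sin (x - pi/2)" by (rule sin_ge_zero) (use a in auto)
  moreover have "cos x = - sin (x - pi/2)"
    by (simp add: cos_sin_eq sin_minus[symmetric])
  ultimately show ?thesis by simp
qed

lemma pi_lb: "314159265 / 100000000 \<le> pi"
proof (rule ccontr)
  let ?a = "314159265 / 200000000 :: real"
  assume "\<not> 314159265 / 100000000 \<le> pi"
  then have "pi / 2 \<le> ?a" by simp
  moreover have "?a \<le> 3 * pi / 2" using pi_ge_two by simp
  ultimately have "cos ?a \<le> 0" by (rule cos_nonpos)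
  moreover have "pev (map cos_coeff [0..<18] @ [- inverse (fact 18)]) ?a \<le> cos ?a"
    by (rule cos_lo) simp
  moreover have "0 < pev (map cos_coeff [0..<18] @ [- inverse (fact 18)]) ?a"
    by (simp add: cos_coeff_def upt_rec fact_numeral)
  ultimately show False by linarith
qed

lemma pi_ub: "pi \<le> 314159266 / 100000000"
proof (rule ccontr)
  let ?b = "157079633 / 100000000 :: real"
  assume "\<not> pi \<le> 314159266 / 100000000"
  then have "?b \<le> pi / 2" by simp
  then have "0 \<le> cos ?b" by (intro cos_ge_zero) (use pi_ge_two in auto)
  moreover have "cos ?b \<le> pev (map cos_coeff [0..<18] @ [inverse (fact 18)]) ?b"
    by (rule cos_up) simp
  moreover have "pev (map cos_coeff [0..<18] @ [inverse (fact 18)]) ?b < 0"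
    by (simp add: cos_coeff_def upt_rec fact_numeral)
  ultimately show False by linarith
qed


definition "PLS = [100000000000000000000, 314159265000000000000, 986960437853402250000, 3100627657401030286093, 9740909058877794849217, 30601968303688897546507, 96138918698402008418709, 302029320361847316393454, 948853092933274869603899, 2980909902688943270777317, 9364804640599799415740978, 29420401427594221435966150, 92426916884979513245703702, 290367722748012534213280394, 912217103582393979592315218, 2865814547818737595691467485, 9003221919690419562902985918, 28284455809218312374232233223, 88858238479490052400292033286, 279156388899113124368872309624, 876995659565995383035785136703, 2755163118174433285279157272445, 8655600201607881026948353685307, 27192369974709837216335399867360, 85427349648629110481535752158109, 268377933765113296064830679692136, 843134144138666757334545986815318, 2648784030190076065641543263265999, 8321400440682521070760389850533477, 26142450462154969179370970665570569, 82128930224895154334888373066322107]"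
definition "PHS = [100000000000000000000, 314159266000000000000, 986960444136587560000, 3100627687009843515944, 9740909182902901737439, 30601968790734353591040, 96138920534520121251456, 302029327091571689545885, 948853117095620767741152, 2980909988085722722079168, 9364804938690793954479135, 29420402457722748296964025, 92426920415427746364769682, 290367734763511958739902116, 912217144233876005399499337, 2865814684651306181913187485, 9003222378220758160511094561, 28284457339766077696696756522, 88858243570692235808932236536, 279156405782178919136330676739, 876995715397274851165429993377, 2755163302343527656423907312938, 8655600807743787283928349062847, 27192371965497953291790637381759, 85427356174798143306512304655256, 268377955121951523993367186504637, 843134213916932312653376241807819, 2648784257836304403148671925481830, 8321401182342081394457548609841785, 26142452875361204517950399394272156, 82128938067630654962351812981113852]"
lemma pw_ok: "pwok 314159265 314159266 100000000 100000000000000000000 100000000000000000000 (tl PLS) (tl PHS)"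
  by (simp add: PLS_def PHS_def)


definition "DqL = [[0, 0, 0, 0, 1], [], [0, 0, -2], [], [1]]"
definition "PqL = [[], [], [], [0, 0, 0, 0, 0, 0, 0, 0, 0, 0, 0, 0, 105/4], [], [0, 0, 0, 0, 0, 0, 0, 0, 0, 0, -105/2, 0, 21/4], [], [0, 0, 0, 0, 5040, 0, 0, 0, 105/4, 0, -21/2, 0, 17/64], [], [0, 0, 0, 0, 0, 0, 0, 0, 21/4, 0, -17/32], [], [-2520, 0, 0, 0, 0, 0, 0, 0, 17/64]]"
definition "QqL = [[], [], [], [0, 0, 0, 0, 0, 0, 0, 0, 0, 0, 0, 0, 1/4], [], [0, 0, 0, 0, 0, 0, 156, 0, -6, 0, -1], [], [0, 0, 0, 0, -657/2, 0, 37/2, 0, 3/2], [], [0, 0, 285, 0, -19, 0, -1], [], [-177/2, 0, 13/2, 0, 1/4]]"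
definition "SU12 = [0, 1, 0, -1/6, 0, 1/120, 0, -1/5040, 0, 1/362880, 0, -1/39916800, 1/479001600]"
definition "SL12 = [0, 1, 0, -1/6, 0, 1/120, 0, -1/5040, 0, 1/362880, 0, -1/39916800, -1/479001600]"
definition "CU12 = [1, 0, -1/2, 0, 1/24, 0, -1/720, 0, 1/40320, 0, -1/3628800, 0, 1/479001600]"
definition "CL12 = [1, 0, -1/2, 0, 1/24, 0, -1/720, 0, 1/40320, 0, -1/3628800, 0, -1/479001600]"
definition "SU14 = [0, 1, 0, -1/6, 0, 1/120, 0, -1/5040, 0, 1/362880, 0, -1/39916800, 0, 1/6227020800, 1/87178291200]"
definition "SL14 = [0, 1, 0, -1/6, 0, 1/120, 0, -1/5040, 0, 1/362880, 0, -1/39916800, 0, 1/6227020800, -1/87178291200]"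
definition "CU14 = [1, 0, -1/2, 0, 1/24, 0, -1/720, 0, 1/40320, 0, -1/3628800, 0, 1/479001600, 0, 1/87178291200]"
definition "CL14 = [1, 0, -1/2, 0, 1/24, 0, -1/720, 0, 1/40320, 0, -1/3628800, 0, 1/479001600, 0, -1/87178291200]"
definition "K315 = [[0,0,0,0,0,0,0,0,315::real]]"
definition "K3 = [[0,0,0,0,0,0,0,0,3::real]]"
definition "WL = [[0,1],[-1::real]]"
definition "UL = [[],[1::real]]"
definition "ONE = [[1::real]]"
lemmas base_defs = DqL_def PqL_def QqL_def SU12_def SL12_def CU12_def CL12_def SU14_def SL14_def CU14_def CL14_def K315_def K3_def WL_def UL_def ONE_def



lemma qev_lift: "qev (map (\<lambda>c. [c]) L) u p = pev L u"
  by (induction L) auto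

lemma qev_DqL: "qev DqL u p = (p^2 - u^2)^2"
  by (simp add: DqL_def power2_eq_square algebra_simps)

lemma qev_K315: "qev K315 u p = 315 * p^8"
  by (simp add: K315_def eval_nat_numeral algebra_simps)

lemma qev_K3: "qev K3 u p = 3 * p^8"
  by (simp add: K3_def eval_nat_numeral algebra_simps)

lemma qev_WL: "qev WL u p = p - u"
  by (simp add: WL_def)

lemma qev_UL: "qev UL u p = u"
  by (simp add: UL_def)

lemma qev_ONE: "qev ONE u p = 1"
  by (simp add: ONE_def)

lemma P19_poly: "315 * pi^8 * P19 x = 210 * pi^12 * x^3 + (168 * pi^12 - 1680 * pi^10) * x^5
   + (645120 * pi^4 + 3360 * pi^8 - 1344 * pi^10 + 34 * pi^12) * x^7
   + (2688 * pi^8 - 272 * pi^10) * x^9 + (544 * pi^8 - 5160960) * x^11"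
proof -
  have "pi \<noteq> 0" by simp
  then show ?thesis unfolding P19_def by (simp add: field_simps) algebra
qed

lemma Q19_poly: "3 * pi^8 * Q19 x = 2 * pi^12 * x^3 + (4992 * pi^6 - 192 * pi^8 - 32 * pi^10) * x^5
   + (- 42048 * pi^4 + 2368 * pi^6 + 192 * pi^8) * x^7
   + (145920 * pi^2 - 9728 * pi^4 - 512 * pi^6) * x^9 + (- 181248 + 13312 * pi^2 + 512 * pi^4) * x^11"
proof -
  have "pi \<noteq> 0" by simp
  then show ?thesis unfolding Q19_def by (simp add: field_simps) algebra
qed

lemma qev_PqL: "qev PqL u pi = 315 * pi^8 * P19 (u/2)"
  unfolding P19_poly PqL_def by (simp add: field_simps) algebra

lemma qev_QqL: "qev QqL u pi = 3 * pi^8 * Q19 (u/2)"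
  unfolding Q19_poly QqL_def by (simp add: field_simps) algebra

lemmas qev_base = qev_lift qev_DqL qev_K315 qev_K3 qev_WL qev_UL qev_ONE qev_PqL qev_QqL


lemma SU12_eq: "SU12 = map sin_coeff [0..<12] @ [inverse (fact 12)]"
  by (simp add: SU12_def sin_coeff_def upt_rec fact_numeral)

lemma SU12_le: "0 \<le> u \<Longrightarrow> sin u \<le> pev SU12 u"
  unfolding SU12_eq by (rule sin_up)

lemma SL12_eq: "SL12 = map sin_coeff [0..<12] @ [- inverse (fact 12)]"
  by (simp add: SL12_def sin_coeff_def upt_rec fact_numeral)

lemma SL12_le: "0 \<le> u \<Longrightarrow> pev SL12 u \<le> sin u"
  unfolding SL12_eq by (rule sin_lo)

lemma CU12_eq: "CU12 = map cos_coeff [0..<12] @ [inverse (fact 12)]"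
  by (simp add: CU12_def cos_coeff_def upt_rec fact_numeral)

lemma CU12_le: "0 \<le> u \<Longrightarrow> cos u \<le> pev CU12 u"
  unfolding CU12_eq by (rule cos_up)

lemma CL12_eq: "CL12 = map cos_coeff [0..<12] @ [- inverse (fact 12)]"
  by (simp add: CL12_def cos_coeff_def upt_rec fact_numeral)

lemma CL12_le: "0 \<le> u \<Longrightarrow> pev CL12 u \<le> cos u"
  unfolding CL12_eq by (rule cos_lo)

lemma SU14_eq: "SU14 = map sin_coeff [0..<14] @ [inverse (fact 14)]"
  by (simp add: SU14_def sin_coeff_def upt_rec fact_numeral)

lemma SU14_le: "0 \<le> u \<Longrightarrow> sin u \<le> pev SU14 u"
  unfolding SU14_eq by (rule sin_up)

lemma SL14_eq: "SL14 = map sin_coeff [0..<14] @ [- inverse (fact 14)]"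
  by (simp add: SL14_def sin_coeff_def upt_rec fact_numeral)

lemma SL14_le: "0 \<le> u \<Longrightarrow> pev SL14 u \<le> sin u"
  unfolding SL14_eq by (rule sin_lo)

lemma CU14_eq: "CU14 = map cos_coeff [0..<14] @ [inverse (fact 14)]"
  by (simp add: CU14_def cos_coeff_def upt_rec fact_numeral)

lemma CU14_le: "0 \<le> u \<Longrightarrow> cos u \<le> pev CU14 u"
  unfolding CU14_eq by (rule cos_up)

lemma CL14_eq: "CL14 = map cos_coeff [0..<14] @ [- inverse (fact 14)]"
  by (simp add: CL14_def cos_coeff_def upt_rec fact_numeral)

lemma CL14_le: "0 \<le> u \<Longrightarrow> pev CL14 u \<le> cos u"
  unfolding CL14_eq by (rule cos_lo)


lemma PB: "pbnd pi 100000000000000000000 0 PLS PHS"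
proof -
  have "pbnd pi 100000000000000000000 0 (100000000000000000000 # tl PLS) (100000000000000000000 # tl PHS)"
    by (rule pbnd_full[OF pw_ok]) (use pi_lb pi_ub in simp_all)
  moreover have "(100000000000000000000::real) # tl PLS = PLS" "(100000000000000000000::real) # tl PHS = PHS" by (simp_all add: PLS_def PHS_def)
  ultimately show ?thesis by simp
qed


definition "GLAe = qsc [5579410636800] (qsub (qmul (qmul K315 DqL) (qsub UL (map (\<lambda>c. [c]) SU12))) (qmul PqL (qadd ONE (map (\<lambda>c. [c]) CU14))))"
lemma GLA_eq: "GLAe = [[0, 0, 0, 0, 0, 0, 0, 0, 0, 0, 0, 0, 0], [0, 0, 0, 0, 0, 0, 0, 0, 0, 0, 0, 0, 0], [0, 0, 0, 0, 0, 0, 0, 0, 0, 0, 0, 0, 0], [0, 0, 0, 0, 0, 0, 0, 0, 0, 0, 0, 0, 0], [0, 0, 0, 0, 0, 0, 0, 0, 0, 0, 0, 0, 0], [0, 0, 0, 0, 0, 0, 0, 0, 0, 0, 0, 0, 0], [0, 0, 0, 0, 0, 0, 0, 0, 0, 0, 0, 0, 0], [0, 0, 0, 0, -56240459218944000, 0, 0, 0, 0, 0, 0, 0, 5928123801600], [0, 0, 0, 0, 0, 0, 0, 0, 0, 0, 0, 0, 0], [0, 0, 0, 0, 14060114804736000, 0, 0, 0, 0, 0, -11856247603200, 0, -280907827200], [0, 0, 0, 0, 0, 0, 0, 0, 0, 0, 0, 0, 0], [28120229609472000, 0, 0, 0, -1171676233728000, 0, 0, 0, 5928123801600, 0, 561815654400,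 0, -24656486400], [0, 0, 0, 0, 0, 0, 0, 0, 0, 0, 0, 0, -3669120], [-7030057402368000, 0, 0, 0, 39055874457600, 0, 0, 0, -280907827200, 0, 49312972800, 0, 1372250880], [0, 0, 0, 0, 0, 0, 0, 0, 0, 0, 7338240, 0, 0], [585838116864000, 0, 0, 0, -697426329600, 0, 0, 0, -24656486400, 0, -2744501760, 0, -28990416], [0, 0, 0, 0, 0, 0, 0, 0, -3669120, 0, 0, 0, 0], [-19527937228800, 0, 0, 0, 7749181440, 0, 0, 0, 1372250880, 0, 57980832, 0, 345576], [0, 0, 0, 0, 0, 0, 0, 0, 0, 0, 0, 0, 0], [348713164800, 0, 0, 0, -58705920, 0, 0, 0, -28990416, 0, -691152, 0, -3430], [0, 0, 0, 0, 0, 0, 0, 0, 0, 0, 0, 0, 0], [-3874590720, 0, 0, 0, -322560, 0, 0, 0, 345576, 0, 6860, 0, -17], [0, 0, 0, 0, 0, 0, 0, 0, 0, 0, 0], [29352960, 0, 0, 0, 0, 0, 0, 0, -3430, 0, 34], [0, 0, 0, 0, 0, 0, 0, 0, 0], [161280, 0, 0, 0, 0, 0, 0, 0, -17]]"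
  by (simp add: GLAe_def base_defs qsc_def psc_def qsub_def)
lemma GLA_zero: "list_all (list_all (\<lambda>c. c = 0)) (take 7 GLAe)"
  unfolding GLA_eq by simp
lemma GLA_len: "list_all (\<lambda>c. length c \<le> length PLS) (drop 7 GLAe)"
  unfolding GLA_eq by (simp add: PLS_def)
lemma GLA_cl: "list_all2 (\<lambda>a b. a * 10000000000000000000000000 \<le> b) [8500023786, 0, -3659182716, 0, 612052214, -33912547, -46701184, 6872118, 1364266, -348146, -32548, 0, 229, 0, -3, 0, -1, 0, -1] (map (\<lambda>c. mlb c PLS PHS) (drop 7 GLAe))"
  unfolding GLA_eq by (simp add: PLS_def PHS_def)
lemma GLA_chk: "chkall2 [8500023786, 0, -3659182716, 0, 612052214, -33912547, -46701184, 6872118, 1364266, -348146, -32548, 0, 229, 0, -3, 0, -1, 0, -1] 16 [0, 16, 24, 32]"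
  by (simp add: chk2_def psc_def Let_def)

lemma GLA_pos:
  assumes "0 < u" "u \<le> 2"
  shows "0 < qev (qsub (qmul (qmul K315 DqL) (qsub UL (map (\<lambda>c. [c]) SU12))) (qmul PqL (qadd ONE (map (\<lambda>c. [c]) CU14)))) u pi"
proof -
  have "0 < qev (drop 7 GLAe) u pi"
    by (rule pos_from_check3[OF PB GLA_len GLA_cl GLA_chk]) (use assms in simp_all)
  moreover have "qev GLAe u pi = u ^ 7 * qev (drop 7 GLAe) u pi"
    by (rule qev_drop[OF GLA_zero])
  ultimately have "0 < qev GLAe u pi" using assms by (metis mult_pos_pos zero_less_power)
  moreover have "qev GLAe u pi = 5579410636800 * qev (qsub (qmul (qmul K315 DqL) (qsub UL (map (\<lambda>c. [c]) SU12))) (qmul PqL (qadd ONE (map (\<lambda>c. [c]) CU14)))) u pi"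
    unfolding GLAe_def qev_qsc by simp
  ultimately show ?thesis by (simp add: zero_less_mult_iff)
qed

lemma GLA_sem: "qev (qsub (qmul (qmul K315 DqL) (qsub UL (map (\<lambda>c. [c]) SU12))) (qmul PqL (qadd ONE (map (\<lambda>c. [c]) CU14)))) u pi = 315 * pi^8 * ((pi^2-u^2)^2 * (u - pev SU12 u) - P19 (u/2) * (1 + pev CU14 u))"
  by (simp add: qev_base algebra_simps)

definition "GUAe = qsc [348713164800] (qsub (qmul QqL (qadd ONE (map (\<lambda>c. [c]) CL14))) (qmul (qmul K3 DqL) (qsub UL (map (\<lambda>c. [c]) SL14))))"
lemma GUA_eq: "GUAe = [[0, 0, 0, 0, 0, 0, 0, 0, 0, 0, 0, 0, 0], [0, 0, 0, 0, 0, 0, 0, 0, 0, 0, 0, 0, 0], [0, 0, 0, 0, 0, 0, 0, 0, 0, 0, 0, 0, 0], [0, 0, 0, 0, 0, 0, 0, 0, 0, 0, 0, 0, 0], [0, 0, 0, 0, 0, 0, 0, 0, 0, 0, 0, 0, 0], [0, 0, 0, 0, 0, 0, 108798507417600, 0, -4184557977600, 0, -348713164800, 0, -34871316480], [0, 0, 0, 0, 0, 0, 0, 0, 0, 0, 0, 0, 0], [0, 0, 0, 0, -229104549273600, 0, -14297239756800, 0, 1917922406400, 0, 156920924160, 0, 3424861440], [0, 0, 0, 0, 0, 0, 0, 0, 0, 0, 0, 0, 0], [0, 0, 198766503936000, 0, 44025037056000, 0, -1656387532800, 0, -339995335680, 0, -14114580480, 0, -118198080], [0, 0, 0, 0, 0,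 0, 0, 0, 0, 0, 0, 0, 0], [-61722230169600, 0, -45158354841600, 0, -1285879795200, 0, 367601794560, 0, 24492948480, 0, 478558080, 0, 2135952], [0, 0, 0, 0, 0, 0, 0, 0, 0, 0, 0, 0, 0], [15430557542400, 0, 3007651046400, 0, -160553352960, 0, -22140518400, 0, -775494720, 0, -8596224, 0, -23856], [0, 0, 0, 0, 0, 0, 0, 0, 0, 0, 0, 0, -12], [-1285879795200, 0, -43589145600, 0, 9993503520, 0, 629332704, 0, 13523328, 0, 95760, 0, 182], [0, 0, 0, 0, 0, 0, 0, 0, 0, 0, 24, 0, 0], [42862659840, 0, -683242560, 0, -253837584, 0, -10312848, 0, -148344, 0, -728, 0, -1], [0, 0, 0, 0, 0, 0, 0, 0, -12, 0, 0], [-765404640, 0, 28828800, 0, 3748836, 0, 108940, 0, 1116, 0, 4], [0, 0, 0, 0, 0, 0, 0, 0, 0], [8504496, 0, -417144, 0, -36542, 0, -802, 0, -6], [0, 0, 0, 0, 0, 0, 0], [-64428, 0, 3592, 0, 258, 0, 4], [0, 0, 0, 0, 0], [354, 0, -26, 0, -1]]"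
  by (simp add: GUAe_def base_defs qsc_def psc_def qsub_def)
lemma GUA_zero: "list_all (list_all (\<lambda>c. c = 0)) (take 5 GUAe)"
  unfolding GUA_eq by simp
lemma GUA_len: "list_all (\<lambda>c. length c \<le> length PLS) (drop 5 GUAe)"
  unfolding GUA_eq by (simp add: PLS_def)
lemma GUA_cl: "list_all2 (\<lambda>a b. a * 100000000000000000000000 \<le> b) [5608174313, 0, -2980149492, 0, 646370632, 0, -72999259, 0, 4496987, -11092, -143204, 2247, 1910, -114, -8, 0, -1, 0, 0, 0, -1] (map (\<lambda>c. mlb c PLS PHS) (drop 5 GUAe))"
  unfolding GUA_eq by (simp add: PLS_def PHS_def)
lemma GUA_chk: "chkall2 [5608174313, 0, -2980149492, 0, 646370632, 0, -72999259, 0, 4496987, -11092, -143204, 2247, 1910, -114, -8, 0, -1, 0, 0, 0, -1] 16 [0, 16, 24, 28, 32]"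
  by (simp add: chk2_def psc_def Let_def)

lemma GUA_pos:
  assumes "0 < u" "u \<le> 2"
  shows "0 < qev (qsub (qmul QqL (qadd ONE (map (\<lambda>c. [c]) CL14))) (qmul (qmul K3 DqL) (qsub UL (map (\<lambda>c. [c]) SL14)))) u pi"
proof -
  have "0 < qev (drop 5 GUAe) u pi"
    by (rule pos_from_check3[OF PB GUA_len GUA_cl GUA_chk]) (use assms in simp_all)
  moreover have "qev GUAe u pi = u ^ 5 * qev (drop 5 GUAe) u pi"
    by (rule qev_drop[OF GUA_zero])
  ultimately have "0 < qev GUAe u pi" using assms by (metis mult_pos_pos zero_less_power)
  moreover have "qev GUAe u pi = 348713164800 * qev (qsub (qmul QqL (qadd ONE (map (\<lambda>c. [c]) CL14))) (qmul (qmul K3 DqL) (qsub UL (map (\<lambda>c. [c]) SL14)))) u pi"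
    unfolding GUAe_def qev_qsc by simp
  ultimately show ?thesis by (simp add: zero_less_mult_iff)
qed

lemma GUA_sem: "qev (qsub (qmul QqL (qadd ONE (map (\<lambda>c. [c]) CL14))) (qmul (qmul K3 DqL) (qsub UL (map (\<lambda>c. [c]) SL14)))) u pi = 3 * pi^8 * (Q19 (u/2) * (1 + pev CL14 u) - (pi^2-u^2)^2 * (u - pev SL14 u))"
  by (simp add: qev_base algebra_simps)

definition "GLBe = qsc [30656102400] (qsub (qmul (qmul K315 (qcomp DqL WL)) (qsub WL (map (\<lambda>c. [c]) SU12))) (qmul (qcomp PqL WL) (qsub ONE (map (\<lambda>c. [c]) CL12))))"
lemma GLB_eq: "GLBe = [[0, 0, 0, 0, 0, 0, 0, 0, 0, 0, 0, 0, 0, 0, 0, 0, 0, 0, 0, 0], [0, 0, 0, 0, 0, 0, 0, 0, 0, 0, 0, 0, 0, 0, 0, 0, 0, 0, 0, 0], [0, 0, 0, 0, 0, 0, 0, 0, 0, 0, 0, 0, 0, 0, 0, 0, 0, 0, 0, 0], [0, 0, 0, 0, 0, 0, 0, 0, 0, 0, 0, 0, 0, 0, 0, 0, 0, 0, 0, 0], [0, 0, 0, 0, 0, 0, 0, 0, 0, 589057007616000, 0, 3218890752000, 0, -1609445376000, 0, -321889075200, 0, -16286054400, 0, 0], [0, 0, 0, 0, 0, 0, 0, 0, -3688848801792000, 0, -3218890752000, 0, 6437781504000, 0, 1931334451200, 0, 130288435200, 0, 0, 0], [0, 0, 0, 0, 0, 0, 0, 10042939146240000, 0, -48283361280000, 0,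 -10166329958400, 0, -4774687948800, 0, -433256947200, 0, 1357171200, 0, 0], [0, 0, 0, 0, 0, 0, -16223209390080000, 0, 307404066816000, 0, 7644865536000, 0, 6303661056000, 0, 779575104000, 0, -10857369600, 0, 0, 0], [0, 0, 0, 0, 0, 17304756682752000, 0, -836911595520000, 0, -1099787673600, 0, -4792890009600, 0, -820928908800, 0, 37445950080, 0, -45239040, 0, 0], [0, 0, 0, 0, -12669553999872000, 0, 1351934115840000, 0, -9871264972800, 0, 2100901017600, 0, 502392844800, 0, -73011818880, 0, 361912320, 0, 0, 0], [0, 0, 0, 6373403688960000, 0, -1442063056896000, 0, 27897053184000, 0, -522111744000, 0, -157053980160, 0, 88571387520, 0, -1262036160, 0, 807840, 0, 0], [0, 0, -2124467896320000, 0, 1055796166656000, 0, -45064470528000, 0, 230878771200, 0, 8978618880, 0, -69195772800, 0, 2516754240, 0, -6462720, 0, 0, 0], [0, 424893579264000, 0, -531116974080000, 0, 48068768563200, 0, -498161664000, 0, 8127060480, 0, 34727454720, 0, -3161632320, 0, 22644072, 0, -8976, 0, 0], [-38626689024000, 0, 177038991360000, 0, -35193205555200, 0, 804722688000, 0, -3565900800, 0, -10760117760, 0, 2593483200, 0, -45588312, 0, 71808, 0, 0], [0, -35407798272000, 0, 17703899136000, 0, -858370867200, 0, 5535129600, 0, 1861251840, -80640, -1388661120, 0, 58077768, 0, -254916, 0, -68], [3218890752000, 0, -5901299712000, 0, 628450099200, 0, -8941363200, 0, -150796800, 80640, 467913600, 0, -48510840, 0, 526428, 0, 544], [0, 1180259942400,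 0, -316141056000, 0, 9537454080, 0, 41932800, -20160, -90034560, 0, 26541480, 0, -695940, 0, -1921], [-107296358400, 0, 105380352000, 0, -6982778880, 0, -67737600, 0, 7539840, 0, -9163992, 0, 609756, 0, 3927], [0, -21076070400, 0, 3512678400, 0, 72253440, 0, 0, 0, 1810632, 0, -353388, 0, -5117], [1916006400, 0, -1170892800, 0, -52899840, 0, 0, 0, -155928, 0, 130356, 0, 4403], [0, 234178560, 0, 26611200, 0, 0, 0, 0, 0, -27708, 0, -2499], [-21288960, 0, -8870400, 0, 0, 0, 0, 0, 2580, 0, 901], [0, 1774080, 0, 0, 0, 0, 0, 0, 0, -187], [-161280, 0, 0, 0, 0, 0, 0, 0, 17], [0]]"
  by (simp add: GLBe_def base_defs qsc_def psc_def qsub_def)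
lemma GLB_zero: "list_all (list_all (\<lambda>c. c = 0)) (take 4 GLBe)"
  unfolding GLB_eq by simp
lemma GLB_len: "list_all (\<lambda>c. length c \<le> length PLS) (drop 4 GLBe)"
  unfolding GLB_eq by (simp add: PLS_def)
lemma GLB_cl: "list_all2 (\<lambda>a b. a * 100000000000000000000000000 \<le> b) [1792678246, -4836572950, 5736154055, -3894796024, 1629675485, -409780641, 47113348, 4409347, -2467323, 369611, -26120, 845, -432, 211, -40, 4, -1, 0, -1, 0, 0] (map (\<lambda>c. mlb c PLS PHS) (drop 4 GLBe))"
  unfolding GLB_eq by (simp add: PLS_def PHS_def)
lemma GLB_chk: "chkall2 [1792678246, -4836572950, 5736154055, -3894796024, 1629675485, -409780641, 47113348, 4409347, -2467323, 369611, -26120, 845, -432, 211, -40, 4, -1, 0, -1, 0, 0] 16 [0, 4, 9, 11, 14, 16, 19]"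
  by (simp add: chk2_def psc_def Let_def)

lemma GLB_pos:
  assumes "0 < u" "u \<le> 19/16"
  shows "0 < qev (qsub (qmul (qmul K315 (qcomp DqL WL)) (qsub WL (map (\<lambda>c. [c]) SU12))) (qmul (qcomp PqL WL) (qsub ONE (map (\<lambda>c. [c]) CL12)))) u pi"
proof -
  have "0 < qev (drop 4 GLBe) u pi"
    by (rule pos_from_check3[OF PB GLB_len GLB_cl GLB_chk]) (use assms in simp_all)
  moreover have "qev GLBe u pi = u ^ 4 * qev (drop 4 GLBe) u pi"
    by (rule qev_drop[OF GLB_zero])
  ultimately have "0 < qev GLBe u pi" using assms by (metis mult_pos_pos zero_less_power)
  moreover have "qev GLBe u pi = 30656102400 * qev (qsub (qmul (qmul K315 (qcomp DqL WL)) (qsub WL (map (\<lambda>c. [c]) SU12))) (qmul (qcomp PqL WL) (qsub ONE (map (\<lambda>c. [c]) CL12)))) u pi"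
    unfolding GLBe_def qev_qsc by simp
  ultimately show ?thesis by (simp add: zero_less_mult_iff)
qed

lemma GLB_sem: "qev (qsub (qmul (qmul K315 (qcomp DqL WL)) (qsub WL (map (\<lambda>c. [c]) SU12))) (qmul (qcomp PqL WL) (qsub ONE (map (\<lambda>c. [c]) CL12)))) u pi = 315 * pi^8 * ((pi^2-(pi-u)^2)^2 * ((pi-u) - pev SU12 u) - P19 ((pi-u)/2) * (1 - pev CL12 u))"
  by (simp add: qev_base algebra_simps)

definition "GUBe = qsc [1916006400] (qsub (qmul (qcomp QqL WL) (qsub ONE (map (\<lambda>c. [c]) CU12))) (qmul (qmul K3 (qcomp DqL WL)) (qsub WL (map (\<lambda>c. [c]) SL12))))"
lemma GUB_eq: "GUBe = [[0, 0, 0, 0, 0, 0, 0, 0, 0, 0, 0, 0, 0, 0, 0, 0], [0, 0, 0, 0, 0, 0, 0, 0, 0, 0, 0, 0, 0, 0, 0, 0], [0, 0, 0, 0, 0, 0, 0, 0, 0, 0, 0, 0, 0, 0, 0, 0], [0, 0, 0, 0, 0, 0, 0, 0, 0, 0, 0, 0, 0, 0, 0, 0], [0, 0, 0, 0, 0, 0, 0, 0, 0, 0, 0, 0, 0, 0, 0, 0], [0, 0, 0, 0, 0, 0, 0, 0, 586297958400, 0, -59396198400, 0, 0, 0, 0, 0], [0, 0, 0, 0, 0, 0, 0, -3843987840000, 0, 352545177600, 0, 3736212480, 0, 0, 0, 0], [0, 0, 0, 0, 0, 0, 11227318502400, 0, -998718336000, 0, -14050713600, 0, 0, 0, 0, 0],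 [0, 0, 0, 0, 0, -18438208588800, 0, 1792304236800, 0, 10769552640, 0, -315152640, 0, 0, 0, 0], [0, 0, 0, 0, 18464074675200, 0, -2352975609600, 0, 34815432960, 0, 1425219840, 0, 0, 0, 0, 0], [0, 0, 0, -11531963520000, 0, 2400157267200, 0, -102446467200, 0, -2370392640, 0, 10562112, 0, 0, 0, 0], [0, 0, 4390049664000, 0, -1862956972800, 0, 137086266240, 0, 1163859840, 0, -50155776, 0, 0, 0, 0, 0], [0, -932616115200, 0, 1029494188800, 0, -120552727680, 0, 1704851280, 0, 94221072, 0, -189120, 0, 0, 0, 0], [84783283200, 0, -372064492800, 0, 78073269120, 0, -3476159280, 0, -80285040, 0, 916320, 0, 0, 0, 0], [0, 77718009600, 0, -37741334400, 0, 3094050960, 0, 10688040, 0, -1800912, -48, 2104, 0, 0], [-7065273600, 0, 12713500800, 0, -1796707440, 0, 42564456, 0, 1754904, 48, -10304, 0, 0], [0, -2590600320, 0, 762292080, 0, -45683352, 0, -705198, -12, 20702, 0, -16], [235509120, 0, -235057680, 0, 25596648, 0, -222174, 0, -21378, 0, 80], [0, 46260720, 0, -9753480, 0, 422298, 0, 10882, 0, -168], [-4205520, 0, 2728440, 0, -243942, 0, -814, 0, 192], [0, -514008, 0, 85902, 0, -2154, 0, -129], [46728, 0, -21762, 0, 1222, 0, 51], [0, 3894, 0, -286, 0, -11], [-354, 0, 26, 0, 1], [0]]"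
  by (simp add: GUBe_def base_defs qsc_def psc_def qsub_def)
lemma GUB_zero: "list_all (list_all (\<lambda>c. c = 0)) (take 5 GUBe)"
  unfolding GUB_eq by simp
lemma GUB_len: "list_all (\<lambda>c. length c \<le> length PLS) (drop 5 GUBe)"
  unfolding GUB_eq by (simp add: PLS_def)
lemma GUB_cl: "list_all2 (\<lambda>a b. a * 100000000000000000000000 \<le> b) [768190925, -1707786300, 1630623757, -859046615, 259737338, -38118336, -1309903, 1529640, -217478, -7484, 5259, -395, -21, 3, 0, -1, 0, -1, 0, 0] (map (\<lambda>c. mlb c PLS PHS) (drop 5 GUBe))"
  unfolding GUB_eq by (simp add: PLS_def PHS_def)
lemma GUB_chk: "chkall2 [768190925, -1707786300, 1630623757, -859046615, 259737338, -38118336, -1309903, 1529640, -217478, -7484, 5259, -395, -21, 3, 0, -1, 0, -1, 0, 0] 16 [0, 4, 9, 14, 19]"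
  by (simp add: chk2_def psc_def Let_def)

lemma GUB_pos:
  assumes "0 < u" "u \<le> 19/16"
  shows "0 < qev (qsub (qmul (qcomp QqL WL) (qsub ONE (map (\<lambda>c. [c]) CU12))) (qmul (qmul K3 (qcomp DqL WL)) (qsub WL (map (\<lambda>c. [c]) SL12)))) u pi"
proof -
  have "0 < qev (drop 5 GUBe) u pi"
    by (rule pos_from_check3[OF PB GUB_len GUB_cl GUB_chk]) (use assms in simp_all)
  moreover have "qev GUBe u pi = u ^ 5 * qev (drop 5 GUBe) u pi"
    by (rule qev_drop[OF GUB_zero])
  ultimately have "0 < qev GUBe u pi" using assms by (metis mult_pos_pos zero_less_power)
  moreover have "qev GUBe u pi = 1916006400 * qev (qsub (qmul (qcomp QqL WL) (qsub ONE (map (\<lambda>c. [c]) CU12))) (qmul (qmul K3 (qcomp DqL WL)) (qsub WL (map (\<lambda>c. [c]) SL12)))) u pi"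
    unfolding GUBe_def qev_qsc by simp
  ultimately show ?thesis by (simp add: zero_less_mult_iff)
qed

lemma GUB_sem: "qev (qsub (qmul (qcomp QqL WL) (qsub ONE (map (\<lambda>c. [c]) CU12))) (qmul (qmul K3 (qcomp DqL WL)) (qsub WL (map (\<lambda>c. [c]) SL12)))) u pi = 3 * pi^8 * (Q19 ((pi-u)/2) * (1 - pev CU12 u) - (pi^2-(pi-u)^2)^2 * ((pi-u) - pev SL12 u))"
  by (simp add: qev_base algebra_simps)

definition "GRQe = qsc [4] (drop 3 QqL)"
lemma GRQ_eq: "GRQe = [[0, 0, 0, 0, 0, 0, 0, 0, 0, 0, 0, 0, 1], [0], [0, 0, 0, 0, 0, 0, 624, 0, -24, 0, -4], [0], [0, 0, 0, 0, -1314, 0, 74, 0, 6], [0], [0, 0, 1140, 0, -76, 0, -4], [0], [-354, 0, 26, 0, 1]]"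
  by (simp add: GRQe_def base_defs qsc_def psc_def qsub_def)
lemma GRQ_zero: "list_all (list_all (\<lambda>c. c = 0)) (take 0 GRQe)"
  unfolding GRQ_eq by simp
lemma GRQ_len: "list_all (\<lambda>c. length c \<le> length PLS) (drop 0 GRQe)"
  unfolding GRQ_eq by (simp add: PLS_def)
lemma GRQ_cl: "list_all2 (\<lambda>a b. a * 10000000000000000 \<le> b) [9242691688, 0, -24100930, 0, 784387, 0, 27011, 0, 188] (map (\<lambda>c. mlb c PLS PHS) (drop 0 GRQe))"
  unfolding GRQ_eq by (simp add: PLS_def PHS_def)
lemma GRQ_chk: "chkall2 [9242691688, 0, -24100930, 0, 784387, 0, 27011, 0, 188] 16 [0, 52]"
  by (simp add: chk2_def psc_def Let_def)

lemma GRQ_pos: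
  assumes "0 < u" "u \<le> 13/4"
  shows "0 < qev (drop 3 QqL) u pi"
proof -
  have "0 < qev (drop 0 GRQe) u pi"
    by (rule pos_from_check3[OF PB GRQ_len GRQ_cl GRQ_chk]) (use assms in simp_all)
  moreover have "qev GRQe u pi = u ^ 0 * qev (drop 0 GRQe) u pi"
    by (rule qev_drop[OF GRQ_zero])
  ultimately have "0 < qev GRQe u pi" using assms by (metis mult_pos_pos zero_less_power)
  moreover have "qev GRQe u pi = 4 * qev (drop 3 QqL) u pi"
    unfolding GRQe_def qev_qsc by simp
  ultimately show ?thesis by (simp add: zero_less_mult_iff)
qed

lemma Qpos: assumes "0 < x" "x < pi/2" shows "0 \<le> Q19 x"
proof -
  define u where "u = 2 * x"
  have u: "0 < u" "u \<le> 13/4" using assms pi_ub unfolding u_def by auto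
  have "0 < qev (drop 3 QqL) u pi" by (rule GRQ_pos) (use u in auto)
  moreover have "qev QqL u pi = u ^ 3 * qev (drop 3 QqL) u pi"
    by (rule qev_drop) (simp add: QqL_def)
  ultimately have "0 < qev QqL u pi" using u by (metis mult_pos_pos zero_less_power)
  then have "0 < 3 * pi^8 * Q19 (u/2)" by (simp add: qev_QqL)
  then show ?thesis unfolding u_def by (simp add: zero_less_mult_iff)
qed

lemma lowA: assumes "0 < x" "x \<le> 1" "0 \<le> P19 x"
  shows "P19 x * (1 + cos (2*x)) < (pi^2 - 4*x^2)^2 * (2*x - sin (2*x))"
proof -
  define u where "u = 2 * x"
  have u: "0 < u" "u \<le> 2" using assms unfolding u_def by auto
  have "0 < qev (qsub (qmul (qmul K315 DqL) (qsub UL (map (\<lambda>c. [c]) SU12))) (qmul PqL (qadd ONE (map (\<lambda>c. [c]) CU14)))) u pi"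
    by (rule GLA_pos) (use u in auto)
  then have g: "P19 (u/2) * (1 + pev CU14 u) < (pi^2-u^2)^2 * (u - pev SU12 u)"
    unfolding GLA_sem by (simp add: zero_less_mult_iff)
  have px: "P19 (u/2) = P19 x" unfolding u_def by simp
  have "P19 (u/2) * (1 + cos u) \<le> P19 (u/2) * (1 + pev CU14 u)"
    using CU14_le[of u] u assms(3) px by (intro mult_left_mono) auto
  moreover have "(pi^2-u^2)^2 * (u - pev SU12 u) \<le> (pi^2-u^2)^2 * (u - sin u)"
    using SU12_le[of u] u by (intro mult_left_mono) auto
  ultimately have "P19 (u/2) * (1 + cos u) < (pi^2-u^2)^2 * (u - sin u)" using g by linarith
  moreover have "(pi^2-u^2)^2 = (pi^2 - 4*x^2)^2" unfolding u_def by (simp add: power_mult_distrib)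
  ultimately show ?thesis using px unfolding u_def by simp
qed

lemma upA: assumes "0 < x" "x \<le> 1"
  shows "(pi^2 - 4*x^2)^2 * (2*x - sin (2*x)) < Q19 x * (1 + cos (2*x))"
proof -
  define u where "u = 2 * x"
  have u: "0 < u" "u \<le> 2" using assms unfolding u_def by auto
  have q: "0 \<le> Q19 x" using Qpos[of x] assms pi_lb by auto
  have "0 < qev (qsub (qmul QqL (qadd ONE (map (\<lambda>c. [c]) CL14))) (qmul (qmul K3 DqL) (qsub UL (map (\<lambda>c. [c]) SL14)))) u pi"
    by (rule GUA_pos) (use u in auto)
  then have g: "(pi^2-u^2)^2 * (u - pev SL14 u) < Q19 (u/2) * (1 + pev CL14 u)"
    unfolding GUA_sem by (simp add: zero_less_mult_iff)
  have qx: "Q19 (u/2) = Q19 x" unfolding u_def by simp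
  have "Q19 (u/2) * (1 + pev CL14 u) \<le> Q19 (u/2) * (1 + cos u)"
    using CL14_le[of u] u q qx by (intro mult_left_mono) auto
  moreover have "(pi^2-u^2)^2 * (u - sin u) \<le> (pi^2-u^2)^2 * (u - pev SL14 u)"
    using SL14_le[of u] u by (intro mult_left_mono) auto
  ultimately have "(pi^2-u^2)^2 * (u - sin u) < Q19 (u/2) * (1 + cos u)" using g by linarith
  moreover have "(pi^2-u^2)^2 = (pi^2 - 4*x^2)^2" unfolding u_def by (simp add: power_mult_distrib)
  ultimately show ?thesis using qx unfolding u_def by simp
qed

lemma lowB: assumes "1 < x" "x < pi/2" "0 \<le> P19 x"
  shows "P19 x * (1 + cos (2*x)) < (pi^2 - 4*x^2)^2 * (2*x - sin (2*x))"
proof -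
  define u where "u = pi - 2 * x"
  have u: "0 < u" "u \<le> 19/16" using assms pi_ub unfolding u_def by auto
  have "0 < qev (qsub (qmul (qmul K315 (qcomp DqL WL)) (qsub WL (map (\<lambda>c. [c]) SU12))) (qmul (qcomp PqL WL) (qsub ONE (map (\<lambda>c. [c]) CL12)))) u pi"
    by (rule GLB_pos) (use u in auto)
  then have g: "P19 ((pi-u)/2) * (1 - pev CL12 u) < (pi^2-(pi-u)^2)^2 * ((pi-u) - pev SU12 u)"
    unfolding GLB_sem by (simp add: zero_less_mult_iff)
  have px: "P19 ((pi-u)/2) = P19 x" "pi - u = 2 * x" unfolding u_def by simp_all
  have "P19 ((pi-u)/2) * (1 - cos u) \<le> P19 ((pi-u)/2) * (1 - pev CL12 u)"
    using CL12_le[of u] u assms(3) px by (intro mult_left_mono) auto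
  moreover have "(pi^2-(pi-u)^2)^2 * ((pi-u) - pev SU12 u) \<le> (pi^2-(pi-u)^2)^2 * ((pi-u) - sin u)"
    using SU12_le[of u] u by (intro mult_left_mono) auto
  ultimately have "P19 ((pi-u)/2) * (1 - cos u) < (pi^2-(pi-u)^2)^2 * ((pi-u) - sin u)" using g by linarith
  moreover have "cos u = - cos (2*x)" "sin u = sin (2*x)" unfolding u_def by simp_all
  moreover have "(pi^2-(pi-u)^2)^2 = (pi^2 - 4*x^2)^2" using px by (simp add: power_mult_distrib)
  ultimately show ?thesis using px by simp
qed

lemma upB: assumes "1 < x" "x < pi/2"
  shows "(pi^2 - 4*x^2)^2 * (2*x - sin (2*x)) < Q19 x * (1 + cos (2*x))"
proof -
  define u where "u = pi - 2 * x"
  have u: "0 < u" "u \<le> 19/16" using assms pi_ub unfolding u_def by auto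
  have q: "0 \<le> Q19 x" using Qpos assms by auto
  have "0 < qev (qsub (qmul (qcomp QqL WL) (qsub ONE (map (\<lambda>c. [c]) CU12))) (qmul (qmul K3 (qcomp DqL WL)) (qsub WL (map (\<lambda>c. [c]) SL12)))) u pi"
    by (rule GUB_pos) (use u in auto)
  then have g: "(pi^2-(pi-u)^2)^2 * ((pi-u) - pev SL12 u) < Q19 ((pi-u)/2) * (1 - pev CU12 u)"
    unfolding GUB_sem by (simp add: zero_less_mult_iff)
  have qx: "Q19 ((pi-u)/2) = Q19 x" "pi - u = 2 * x" unfolding u_def by simp_all
  have "Q19 ((pi-u)/2) * (1 - pev CU12 u) \<le> Q19 ((pi-u)/2) * (1 - cos u)"
    using CU12_le[of u] u q qx by (intro mult_left_mono) auto
  moreover have "(pi^2-(pi-u)^2)^2 * ((pi-u) - sin u) \<le> (pi^2-(pi-u)^2)^2 * ((pi-u) - pev SL12 u)"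
    using SL12_le[of u] u by (intro mult_left_mono) auto
  ultimately have "(pi^2-(pi-u)^2)^2 * ((pi-u) - sin u) < Q19 ((pi-u)/2) * (1 - cos u)" using g by linarith
  moreover have "cos u = - cos (2*x)" "sin u = sin (2*x)" unfolding u_def by simp_all
  moreover have "(pi^2-(pi-u)^2)^2 = (pi^2 - 4*x^2)^2" using qx by (simp add: power_mult_distrib)
  ultimately show ?thesis using qx by simp
qed

theorem mainTheorem19:
  fixes x :: real
  assumes "0 < x" and "x < pi / 2"
  shows "P19 x / (pi^2 - 4 * x^2)^2 < x * (1 / (cos x)^2) - tan x
       \<and> x * (1 / (cos x)^2) - tan x < Q19 x / (pi^2 - 4 * x^2)^2"
proof -
  have c0: "0 < cos x" using assms by (intro cos_gt_zero_pi) auto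
  have A: "1 + cos (2*x) = 2 * (cos x)^2" by (simp add: cos_double_cos)
  have A0: "0 < 1 + cos (2*x)" using A c0 by simp
  have sx: "sin (2*x) \<le> 2*x" using sin_x_le_x[of "2*x"] assms by simp
  have "2 * x < pi" using assms by simp
  then have "(2*x)^2 < pi^2" using assms by (intro power_strict_mono) auto
  then have d0: "0 < (pi^2 - 4 * x^2)^2" by (simp add: power_mult_distrib)
  have F: "x * (1 / (cos x)^2) - tan x = (2*x - sin (2*x)) / (1 + cos (2*x))"
    using c0 unfolding A tan_def sin_double by (simp add: field_simps power2_eq_square)
  have low: "P19 x * (1 + cos (2*x)) < (pi^2 - 4*x^2)^2 * (2*x - sin (2*x))"
  proof (cases "0 \<le> P19 x")
    case True
    then show ?thesis using lowA lowB assms by (cases "x \<le> 1") auto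
  next
    case False
    then have "P19 x * (1 + cos (2*x)) < 0" using A0 by (simp add: mult_neg_pos)
    moreover have "0 \<le> (pi^2 - 4*x^2)^2 * (2*x - sin (2*x))" using sx by simp
    ultimately show ?thesis by linarith
  qed
  have up: "(pi^2 - 4*x^2)^2 * (2*x - sin (2*x)) < Q19 x * (1 + cos (2*x))"
    using upA upB assms by (cases "x \<le> 1") auto
  have "P19 x / (pi^2 - 4 * x^2)^2 < (2*x - sin (2*x)) / (1 + cos (2*x))"
    using low d0 A0 by (simp add: divide_less_eq less_divide_eq mult.commute)
  moreover have "(2*x - sin (2*x)) / (1 + cos (2*x)) < Q19 x / (pi^2 - 4 * x^2)^2"
    using up d0 A0 by (simp add: divide_less_eq less_divide_eq mult.commute)
  ultimately show ?thesis unfolding F by simp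
qed

end
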